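(* Let $p$ be a prime, $a>0$ an integer, and $n=p^a+1$. Then for every prime $r$ dividing $n$, $n$ satisfies Condition 1 with $p$ and $r$; i.e., for every integer $k$ with $1\le k\le n-1$, $\binom{n}{k}$ is divisible by $p$ or by $r$.
   Context: A positive integer $n$ satisfies Condition 1 with primes $p$ and $q$ if for all integers $k$ with $1\le k\le n-1$ the binomial coefficient $\binom{n}{k}$ is divisible by at least one of $p$ or $q$. *)

theory Defs
  imports "HOL-Computational_Algebra.Primes"
begin

definition condition1 :: "nat \<Rightarrow> nat \<Rightarrow> nat \<Rightarrow> bool" where
  "condition1 n p q \<longleftrightarrow> (\<forall>k. 1 \<le> k \<and> k \<le> n - 1 \<longrightarrow> p dvd (n choose k) \<or> q dvd (n choose k))"

end

theory Submission
  imports Defs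
begin

lemma pp_dvd_choose:
  fixes p a j :: nat
  assumes p: "prime p" and j: "0 < j" "j < p ^ a"
  shows "p dvd (p ^ a choose j)"
proof (rule ccontr)
  assume nd: "\<not> p dvd (p ^ a choose j)"
  have "a > 0" using j by (cases a) auto
  have pa: "p ^ a > 0" using p by (simp add: prime_gt_0_nat)
  obtain m where m: "p ^ a = Suc m" using pa by (cases "p ^ a") auto
  obtain i where i: "j = Suc i" using j by (cases j) auto
  have eq: "j * (p ^ a choose j) = p ^ a * (m choose i)"
    using Suc_times_binomial[of i m] m i by simp
  have "p ^ a dvd j * (p ^ a choose j)" by (simp add: eq)
  moreover have "coprime (p ^ a) (p ^ a choose j)"
    using nd p by (simp add: prime_imp_coprime)
  ultimately have "p ^ a dvd j"
    using coprime_dvd_mult_left_iff by blast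
  with j show False using nat_dvd_not_less by blast
qed

theorem mainTheorem3:
  fixes p a r n :: nat
  assumes "prime p" and "a > 0" and "n = p ^ a + 1"
    and "prime r" and "r dvd n"
  shows "condition1 n p r"
  unfolding condition1_def
proof (intro allI impI)
  fix k assume k: "1 \<le> k \<and> k \<le> n - 1"
  show "p dvd (n choose k) \<or> r dvd (n choose k)"
  proof (cases "k = 1 \<or> k = n - 1")
    case True
    then have "n choose k = n"
      using k assms(3) by (auto simp: binomial_symmetric[of 1 n, symmetric])
    then show ?thesis using assms(5) by simp
  next
    case False
    obtain i where i: "k = Suc i" using k by (cases k) auto
    have "n choose k = (p ^ a choose i) + (p ^ a choose k)"
      using assms(3) i by simp
    moreover have "p dvd (p ^ a choose i)"
      using pp_dvd_choose[OF assms(1)] False k i assms(3) by auto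
    moreover have "p dvd (p ^ a choose k)"
      using pp_dvd_choose[OF assms(1)] False k i assms(3) by auto
    ultimately show ?thesis by simp
  qed
qed

end
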